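(* Let $R$ be a ring and $u\in R$. Suppose that $m:=\mathrm{char}(R)$ is finite and $J(R)$ is a nil ideal of index $s+1$, where $s\geq 0$. If $u^t-1\in J(R)$ for some $t\in\mathbb{N}$, then $u^{tm^s}=1$.
   Context: All rings are associative with identity; $\mathrm{char}(R):=|1\cdot\mathbb{Z}|$. A nil ideal $I$ is nil of index $k$ if $r^k=0$ for all $r\in I$ and $k$ is the minimal natural number with this property. *)

theory Defs
  imports Main
begin

definition left_ideal :: "'a::ring_1 set \<Rightarrow> bool" where
  "left_ideal I \<longleftrightarrow> 0 \<in> I \<and> (\<forall>x\<in>I. \<forall>y\<in>I. x + y \<in> I) \<and> (\<forall>x\<in>I. - x \<in> I)
     \<and> (\<forall>r. \<forall>x\<in>I. r * x \<in> I)"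

definition maximal_left_ideal :: "'a::ring_1 set \<Rightarrow> bool" where
  "maximal_left_ideal I \<longleftrightarrow> left_ideal I \<and> I \<noteq> UNIV \<and>
     (\<forall>K. left_ideal K \<and> I \<subseteq> K \<and> K \<noteq> UNIV \<longrightarrow> K = I)"

definition jacobson :: "'a::ring_1 set" where
  "jacobson = \<Inter> {I. maximal_left_ideal I}"

definition ring_char :: "'a::ring_1 itself \<Rightarrow> nat" where
  "ring_char _ = card (range (of_int :: int \<Rightarrow> 'a))"

definition nil_of_index :: "'a::ring_1 set \<Rightarrow> nat \<Rightarrow> bool" where
  "nil_of_index I k \<longleftrightarrow> (\<forall>r\<in>I. r ^ k = 0) \<and> (\<forall>j. (\<forall>r\<in>I. r ^ j = 0) \<longrightarrow> k \<le> j)"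

end

theory Submission
  imports Defs "HOL-Computational_Algebra.Primes"
begin

lemma nt: fixes m s k :: nat assumes m2: "2 \<le> m" and k1: "1 \<le> k" and ks: "k \<le> s"
  shows "m dvd (m^s choose k)"
proof -
  define c where "c = m^s choose k"
  have kc: "k * c = m^s * (m^s - 1 choose (k - 1))"
    unfolding c_def using times_binomial_minus1_eq[of k "m^s"] k1 by simp
  have "s < 2^s" by (rule less_exp)
  also have "2^s \<le> m^s" using m2 by (simp add: power_mono)
  finally have "k \<le> m^s" using ks by simp
  hence c0: "c \<noteq> 0" unfolding c_def by simp
  have k0: "k \<noteq> 0" using k1 by simp
  have m0: "m \<noteq> 0" using m2 by simp
  show ?thesis unfolding c_def[symmetric]
  proof (rule multiplicity_le_imp_dvd[OF m0])
    fix p :: nat assume p: "prime p"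
    define a where "a = multiplicity p m"
    have "m^s dvd k * c" using kc by simp
    hence "multiplicity p (m^s) \<le> multiplicity p (k * c)"
      by (rule dvd_imp_multiplicity_le) (use k0 c0 in simp)
    hence h1: "s * a \<le> multiplicity p k + multiplicity p c"
      using p k0 c0 m0 by (simp add: a_def prime_elem_multiplicity_mult_distrib prime_elem_multiplicity_power_distrib)
    define v where "v = multiplicity p k"
    have "p ^ v dvd k" unfolding v_def by (rule multiplicity_dvd)
    hence "p ^ v \<le> k" using k0 by (simp add: dvd_imp_le)
    moreover have "2 ^ v \<le> p ^ v" using prime_ge_2_nat[OF p] by (simp add: power_mono)
    moreover have "v < 2 ^ v" by (rule less_exp)
    ultimately have vs: "v + 1 \<le> s" using ks by linarith
    show "multiplicity p m \<le> multiplicity p c"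
    proof (cases "a = 0")
      case True then show ?thesis by (simp add: a_def)
    next
      case False
      have "s * a = a + (s - 1) * a" using vs by (cases s) auto
      moreover have "(s - 1) * 1 \<le> (s - 1) * a" using False by (intro mult_le_mono2) simp
      ultimately show ?thesis using h1 vs unfolding a_def[symmetric] v_def[symmetric] by linarith
    qed
  qed
qed

lemma binom1: fixes x :: "'a::ring_1"
  shows "(1 + x)^n = (\<Sum>k\<le>n. of_nat (n choose k) * x^k)"
proof (induction n)
  case 0 then show ?case by simp
next
  case (Suc n)
  have h: "1 + (\<Sum>k\<le>n. of_nat (n choose Suc k) * x^Suc k) = (\<Sum>k\<le>n. of_nat (n choose k) * x^k)"
  proof -
    have "(\<Sum>k\<le>n. of_nat (n choose k) * x^k) = (\<Sum>k\<le>Suc n. of_nat (n choose k) * (x::'a)^k)" by (simp add: binomial_eq_0)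
    also have "\<dots> = 1 + (\<Sum>k\<le>n. of_nat (n choose Suc k) * x^Suc k)"
      by (subst sum.atMost_Suc_shift) simp
    finally show ?thesis by simp
  qed
  have "(\<Sum>k\<le>Suc n. of_nat (Suc n choose k) * x^k)
      = 1 + (\<Sum>k\<le>n. of_nat (Suc n choose Suc k) * x^Suc k)"
    by (subst sum.atMost_Suc_shift) simp
  also have "\<dots> = (\<Sum>k\<le>n. of_nat (n choose k) * x^k * x) + (1 + (\<Sum>k\<le>n. of_nat (n choose Suc k) * x^Suc k))"
    by (simp add: distrib_right sum.distrib power_Suc2 mult.assoc add_ac power_commutes)
  also have "\<dots> = (\<Sum>k\<le>n. of_nat (n choose k) * x^k) * x + (\<Sum>k\<le>n. of_nat (n choose k) * x^k)"
    unfolding h by (simp add: sum_distrib_right)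
  also have "\<dots> = (1 + x)^Suc n" unfolding power_Suc2 Suc.IH distrib_left mult_1_right by (rule add.commute)
  finally show ?case by simp
qed

lemma char0: assumes fin: "finite (range (of_int :: int \<Rightarrow> 'a::ring_1))"
  shows "of_nat (card (range (of_int :: int \<Rightarrow> 'a))) = (0::'a)"
proof -
  have "range (of_nat :: nat \<Rightarrow> 'a) \<subseteq> range (of_int :: int \<Rightarrow> 'a)"
    by (auto intro!: image_eqI[where x="int _"])
  hence "finite (range (of_nat :: nat \<Rightarrow> 'a))" using fin finite_subset by blast
  hence "\<not> inj (of_nat :: nat \<Rightarrow> 'a)" using finite_imageD infinite_UNIV_nat by blast
  then obtain i j where ij: "of_nat i = (of_nat j :: 'a)" "i < j"
    unfolding inj_def by (metis linorder_neqE_nat)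
  have ex: "\<exists>d. 0 < d \<and> of_nat d = (0::'a)"
    by (rule exI[of _ "j - i"]) (use ij in \<open>simp add: of_nat_diff\<close>)
  define d where "d = (LEAST d. 0 < d \<and> of_nat d = (0::'a))"
  have d: "0 < d" "of_nat d = (0::'a)" using LeastI_ex[OF ex] unfolding d_def by auto
  have dmin: "\<And>e. 0 < e \<Longrightarrow> e < d \<Longrightarrow> of_nat e \<noteq> (0::'a)"
    unfolding d_def using not_less_Least by blast
  have "range (of_int :: int \<Rightarrow> 'a) = of_nat ` {..<d}"
  proof
    show "range (of_int :: int \<Rightarrow> 'a) \<subseteq> of_nat ` {..<d}"
    proof
      fix y assume "y \<in> range (of_int :: int \<Rightarrow> 'a)"
      then obtain z where y: "y = of_int z" by auto
      have "z = int d * (z div int d) + z mod int d" by simp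
      hence "(of_int z :: 'a) = of_int (int d) * of_int (z div int d) + of_int (z mod int d)"
        by (metis of_int_add of_int_mult)
      also have "\<dots> = of_int (z mod int d)" using d by simp
      also have "\<dots> = of_nat (nat (z mod int d))" using d by simp
      finally have "y = of_nat (nat (z mod int d))" using y by simp
      moreover have "nat (z mod int d) < d" using d by (simp add: nat_less_iff)
      ultimately show "y \<in> of_nat ` {..<d}" by blast
    qed
  next
    show "of_nat ` {..<d} \<subseteq> range (of_int :: int \<Rightarrow> 'a)"
      by (auto intro!: image_eqI[where x="int _"])
  qed
  moreover have "inj_on (of_nat :: nat \<Rightarrow> 'a) {..<d}"
  proof (rule inj_onI, rule ccontr)
    fix a b assume a: "a \<in> {..<d}" and b: "b \<in> {..<d}" and e: "(of_nat a :: 'a) = of_nat b" and ne: "a \<noteq> b"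
    show False
    proof (cases "a < b")
      case True
      hence z: "of_nat (b - a) = (0::'a)" using e by (simp add: of_nat_diff)
      have "0 < b - a" "b - a < d" using True b by auto
      from dmin[OF this] z show False by blast
    next
      case False
      hence "b < a" using ne by simp
      hence z: "of_nat (a - b) = (0::'a)" using e by (simp add: of_nat_diff)
      have "0 < a - b" "a - b < d" using \<open>b < a\<close> a by auto
      from dmin[OF this] z show False by blast
    qed
  qed
  ultimately have "card (range (of_int :: int \<Rightarrow> 'a)) = d" by (simp add: card_image)
  thus ?thesis using d by simp
qed

theorem lemma2p10:
  fixes u :: "'a::ring_1" and s t :: nat
  assumes "finite (range (of_int :: int \<Rightarrow> 'a))"
    and "nil_of_index (jacobson :: 'a set) (s + 1)"
    and "u ^ t - 1 \<in> jacobson"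
  shows "u ^ (t * ring_char TYPE('a) ^ s) = 1"
proof -
  define m where "m = ring_char TYPE('a)"
  have mz: "of_nat m = (0::'a)" unfolding m_def ring_char_def using char0[OF assms(1)] .
  have "range (of_int :: int \<Rightarrow> 'a) \<noteq> {}" by simp
  hence m1: "1 \<le> m" unfolding m_def ring_char_def using assms(1)
    by (simp add: Suc_leI card_gt_0_iff)
  define j where "j = u ^ t - 1"
  have js: "j ^ (s + 1) = 0" using assms(2,3) unfolding nil_of_index_def j_def by blast
  define N where "N = m ^ s"
  have "u ^ (t * m ^ s) = (1 + j) ^ N" unfolding N_def j_def by (simp add: power_mult)
  also have "\<dots> = (\<Sum>k\<le>N. of_nat (N choose k) * j^k)" by (rule binom1)
  also have "\<dots> = (\<Sum>k\<le>N. if k = 0 then 1 else 0)"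
  proof (rule sum.cong)
    fix k assume "k \<in> {..N}"
    show "of_nat (N choose k) * j^k = (if k = 0 then 1 else (0::'a))"
    proof (cases "k = 0")
      case True then show ?thesis by simp
    next
      case False
      show ?thesis
      proof (cases "s + 1 \<le> k")
        case True
        obtain r where kr: "k = (s + 1) + r" using True le_iff_add by blast
        have "j ^ k = j ^ (s + 1) * j ^ r" unfolding kr by (rule power_add)
        then show ?thesis using js False by simp
      next
        case ks: False
        show ?thesis
        proof (cases "m = 1")
          case True
          hence "(1::'a) = 0" using mz by simp
          hence z0: "\<And>z::'a. z = 0" by (metis mult_1_right mult_zero_right)
          have "of_nat (N choose k) * j^k = (0::'a)" by (rule z0)
          then show ?thesis using False by simp
        next
          case m2: False
          have "m dvd (m ^ s choose k)" using nt[of m k s] m1 m2 False ks by simp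
          then obtain q where q: "N choose k = m * q" unfolding N_def by blast
          have "of_nat (N choose k) = (of_nat m * of_nat q :: 'a)" unfolding q by simp
          then show ?thesis using mz False by simp
        qed
      qed
    qed
  qed simp
  also have "\<dots> = 1" by simp
  finally show ?thesis unfolding m_def .
qed

end
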